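(* Let $(\mathbb{C},\mathcal{N})$ be a regular multi-pointed category with $\mathcal{N}$-kernels, in which every kernel star has a coequaliser and every regular diamond of the form (1) is left saturated. Then the following are equivalent: (i) $(\mathbb{C},\mathcal{N})$ is a star-regular category; (ii) for every morphism $m\colon U\to V$, $m$ is a monomorphism if and only if its kernel star $M^*$ equals $\Delta_U^*$.
   Context: Throughout, $\mathbb{C}$ is a finitely complete regular category. An ideal of morphisms is a class $\mathcal{N}$ of morphisms of $\mathbb{C}$ such that for composable $f,g$, if $f\in\mathcal{N}$ or $g\in\mathcal{N}$ then $gf\in\mathcal{N}$; $(\mathbb{C},\mathcal{N})$ is then called a multi-pointed category. A star on $X$ is a pair of parallel morphisms $\tau=(\tau_1,\tau_2)\colon T\rightrightarrows X$ with $\tau_1\in\mathcal{N}$; it is a monic star if $\tau_1,\tau_2$ are jointly monic. An $\mathcal{N}$-kernel of $f\colon X\to Y$ is a morphism $k\colon \mathcal{N}\ker(f)\to X$ with $fk\in\mathcal{N}$ such that every $g\colon L\to X$ with $fg\in\mathcal{N}$ factors uniquely through $k$. For a relation $\rho=(\rho_1,\rho_2)\colon R\rightrightarrows X$, $\rho^*\colon R^*\rightrightarrows X$ is the monic star $(\rho_1k,\rho_2k)$, where $k\colon R^*\to R$ is the $\mathcal{N}$-kernel of $\rho_1$; $\Delta_X^*:=(1_X,1_X)^*$. The kernel star of $f\colon X\to Y$, denoted by the corresponding capital letter $F^*\rightrightarrows X$, is $Eq(f)^*$, where $Eq(f)$ is the kernel pair of $f$. Every star factors uniquely up to isomorphism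 as a regular epimorphism followed by a monic star; for $f\colon X\to Y$ and a star $\lambda\colon U\rightrightarrows X$, the image $f(\lambda)\colon f(U)\rightrightarrows Y$ is the monic star part of the factorisation of $(f\lambda_1,f\lambda_2)$. A star-regular category is a regular multi-pointed category with $\mathcal{N}$-kernels in which every regular epimorphism is a coequaliser of some star. A diamond is a commutative square $ge=hf$ with $e\colon X\to Z$, $f\colon X\to Y$, $g\colon Z\to W$, $h\colon Y\to W$; it is regular if all four arrows are regular epimorphisms, and left saturated if $e(F^* )=G^*$. A regular diamond of the form (1) is one with $h=1_Y$ (so $ge=f$). *)

theory Defs
  imports Main
begin

text \<open>Abstract (small) categories: objects of type 'o, arrows of type 'm.
  Comp C g f is the composite g after f (defined when Cod f = Dom g).\<close>

record ('o, 'm) category =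
  Ob :: "'o set"
  Ar :: "'m set"
  Dom :: "'m \<Rightarrow> 'o"
  Cod :: "'m \<Rightarrow> 'o"
  Id :: "'o \<Rightarrow> 'm"
  Comp :: "'m \<Rightarrow> 'm \<Rightarrow> 'm"

definition is_category :: "('o, 'm, 'x) category_scheme \<Rightarrow> bool" where
  "is_category C \<longleftrightarrow>
     (\<forall>f\<in>Ar C. Dom C f \<in> Ob C \<and> Cod C f \<in> Ob C) \<and>
     (\<forall>X\<in>Ob C. Id C X \<in> Ar C \<and> Dom C (Id C X) = X \<and> Cod C (Id C X) = X) \<and>
     (\<forall>f\<in>Ar C. \<forall>g\<in>Ar C. Cod C f = Dom C g \<longrightarrow>
        Comp C g f \<in> Ar C \<and> Dom C (Comp C g f) = Dom C f \<and> Cod C (Comp C g f) = Cod C g) \<and>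
     (\<forall>f\<in>Ar C. \<forall>g\<in>Ar C. \<forall>h\<in>Ar C. Cod C f = Dom C g \<longrightarrow> Cod C g = Dom C h \<longrightarrow>
        Comp C h (Comp C g f) = Comp C (Comp C h g) f) \<and>
     (\<forall>f\<in>Ar C. Comp C f (Id C (Dom C f)) = f \<and> Comp C (Id C (Cod C f)) f = f)"

definition parallel :: "('o, 'm, 'x) category_scheme \<Rightarrow> 'm \<Rightarrow> 'm \<Rightarrow> bool" where
  "parallel C f g \<longleftrightarrow> f \<in> Ar C \<and> g \<in> Ar C \<and> Dom C f = Dom C g \<and> Cod C f = Cod C g"

definition mono :: "('o, 'm, 'x) category_scheme \<Rightarrow> 'm \<Rightarrow> bool" where
  "mono C m \<longleftrightarrow> m \<in> Ar C \<and>
     (\<forall>a\<in>Ar C. \<forall>b\<in>Ar C. Cod C a = Dom C m \<longrightarrow> Cod C b = Dom C m \<longrightarrow> Dom C a = Dom C b \<longrightarrow>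
        Comp C m a = Comp C m b \<longrightarrow> a = b)"

definition jointly_monic :: "('o, 'm, 'x) category_scheme \<Rightarrow> 'm \<Rightarrow> 'm \<Rightarrow> bool" where
  "jointly_monic C f g \<longleftrightarrow> parallel C f g \<and>
     (\<forall>a\<in>Ar C. \<forall>b\<in>Ar C. Cod C a = Dom C f \<longrightarrow> Cod C b = Dom C f \<longrightarrow> Dom C a = Dom C b \<longrightarrow>
        Comp C f a = Comp C f b \<longrightarrow> Comp C g a = Comp C g b \<longrightarrow> a = b)"

definition iso :: "('o, 'm, 'x) category_scheme \<Rightarrow> 'm \<Rightarrow> bool" where
  "iso C \<phi> \<longleftrightarrow> \<phi> \<in> Ar C \<and> (\<exists>\<psi>\<in>Ar C. Dom C \<psi> = Cod C \<phi> \<and> Cod C \<psi> = Dom C \<phi> \<and>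
        Comp C \<psi> \<phi> = Id C (Dom C \<phi>) \<and> Comp C \<phi> \<psi> = Id C (Cod C \<phi>))"

definition coequaliser :: "('o, 'm, 'x) category_scheme \<Rightarrow> 'm \<Rightarrow> 'm \<Rightarrow> 'm \<Rightarrow> bool" where
  "coequaliser C f g q \<longleftrightarrow> parallel C f g \<and> q \<in> Ar C \<and> Dom C q = Cod C f \<and>
     Comp C q f = Comp C q g \<and>
     (\<forall>h\<in>Ar C. Dom C h = Cod C f \<longrightarrow> Comp C h f = Comp C h g \<longrightarrow>
        (\<exists>!u. u \<in> Ar C \<and> Dom C u = Cod C q \<and> Cod C u = Cod C h \<and> Comp C u q = h))"

definition regular_epi :: "('o, 'm, 'x) category_scheme \<Rightarrow> 'm \<Rightarrow> bool" where
  "regular_epi C q \<longleftrightarrow> (\<exists>f g. coequaliser C f g q)"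

definition pullback :: "('o, 'm, 'x) category_scheme \<Rightarrow> 'm \<Rightarrow> 'm \<Rightarrow> 'm \<Rightarrow> 'm \<Rightarrow> bool" where
  "pullback C f g p1 p2 \<longleftrightarrow> f \<in> Ar C \<and> g \<in> Ar C \<and> p1 \<in> Ar C \<and> p2 \<in> Ar C \<and>
     Cod C f = Cod C g \<and> Cod C p1 = Dom C f \<and> Cod C p2 = Dom C g \<and> Dom C p1 = Dom C p2 \<and>
     Comp C f p1 = Comp C g p2 \<and>
     (\<forall>a\<in>Ar C. \<forall>b\<in>Ar C. Cod C a = Dom C f \<longrightarrow> Cod C b = Dom C g \<longrightarrow> Dom C a = Dom C b \<longrightarrow>
        Comp C f a = Comp C g b \<longrightarrow>
        (\<exists>!u. u \<in> Ar C \<and> Dom C u = Dom C a \<and> Cod C u = Dom C p1 \<and>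
              Comp C p1 u = a \<and> Comp C p2 u = b))"

definition kernel_pair :: "('o, 'm, 'x) category_scheme \<Rightarrow> 'm \<Rightarrow> 'm \<Rightarrow> 'm \<Rightarrow> bool" where
  "kernel_pair C f p1 p2 \<longleftrightarrow> pullback C f f p1 p2"

definition terminal :: "('o, 'm, 'x) category_scheme \<Rightarrow> 'o \<Rightarrow> bool" where
  "terminal C T \<longleftrightarrow> T \<in> Ob C \<and>
     (\<forall>X\<in>Ob C. \<exists>!t. t \<in> Ar C \<and> Dom C t = X \<and> Cod C t = T)"

definition finitely_complete :: "('o, 'm, 'x) category_scheme \<Rightarrow> bool" where
  "finitely_complete C \<longleftrightarrow> (\<exists>T. terminal C T) \<and>
     (\<forall>f\<in>Ar C. \<forall>g\<in>Ar C. Cod C f = Cod C g \<longrightarrow> (\<exists>p1 p2. pullback C f g p1 p2))"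

definition regular_category :: "('o, 'm, 'x) category_scheme \<Rightarrow> bool" where
  "regular_category C \<longleftrightarrow> is_category C \<and> finitely_complete C \<and>
     (\<forall>f p1 p2. kernel_pair C f p1 p2 \<longrightarrow> (\<exists>q. coequaliser C p1 p2 q)) \<and>
     (\<forall>f g p1 p2. pullback C f g p1 p2 \<longrightarrow> regular_epi C g \<longrightarrow> regular_epi C p1)"

definition ideal :: "('o, 'm, 'x) category_scheme \<Rightarrow> 'm set \<Rightarrow> bool" where
  "ideal C N \<longleftrightarrow> N \<subseteq> Ar C \<and>
     (\<forall>f\<in>Ar C. \<forall>g\<in>Ar C. Cod C f = Dom C g \<longrightarrow> (f \<in> N \<or> g \<in> N) \<longrightarrow> Comp C g f \<in> N)"

definition N_kernel :: "('o, 'm, 'x) category_scheme \<Rightarrow> 'm set \<Rightarrow> 'm \<Rightarrow> 'm \<Rightarrow> bool" where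
  "N_kernel C N f k \<longleftrightarrow> f \<in> Ar C \<and> k \<in> Ar C \<and> Cod C k = Dom C f \<and> Comp C f k \<in> N \<and>
     (\<forall>g\<in>Ar C. Cod C g = Dom C f \<longrightarrow> Comp C f g \<in> N \<longrightarrow>
        (\<exists>!u. u \<in> Ar C \<and> Dom C u = Dom C g \<and> Cod C u = Dom C k \<and> Comp C k u = g))"

definition has_N_kernels :: "('o, 'm, 'x) category_scheme \<Rightarrow> 'm set \<Rightarrow> bool" where
  "has_N_kernels C N \<longleftrightarrow> (\<forall>f\<in>Ar C. \<exists>k. N_kernel C N f k)"

definition star :: "('o, 'm, 'x) category_scheme \<Rightarrow> 'm set \<Rightarrow> 'm \<Rightarrow> 'm \<Rightarrow> bool" where
  "star C N t1 t2 \<longleftrightarrow> parallel C t1 t2 \<and> t1 \<in> N"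

definition star_of :: "('o, 'm, 'x) category_scheme \<Rightarrow> 'm set \<Rightarrow> 'm \<Rightarrow> 'm \<Rightarrow> 'm \<Rightarrow> 'm \<Rightarrow> bool" where
  "star_of C N r1 r2 s1 s2 \<longleftrightarrow> parallel C r1 r2 \<and>
     (\<exists>k. N_kernel C N r1 k \<and> s1 = Comp C r1 k \<and> s2 = Comp C r2 k)"

text \<open>(s1, s2) is (a choice of) the kernel star F^* = Eq(f)^* of f.\<close>
definition kernel_star :: "('o, 'm, 'x) category_scheme \<Rightarrow> 'm set \<Rightarrow> 'm \<Rightarrow> 'm \<Rightarrow> 'm \<Rightarrow> bool" where
  "kernel_star C N f s1 s2 \<longleftrightarrow> (\<exists>p1 p2. kernel_pair C f p1 p2 \<and> star_of C N p1 p2 s1 s2)"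

text \<open>(s1, s2) is (a choice of) Delta_U^* = (1_U, 1_U)^*.\<close>
definition diag_star :: "('o, 'm, 'x) category_scheme \<Rightarrow> 'm set \<Rightarrow> 'o \<Rightarrow> 'm \<Rightarrow> 'm \<Rightarrow> bool" where
  "diag_star C N U s1 s2 \<longleftrightarrow> star_of C N (Id C U) (Id C U) s1 s2"

text \<open>Equality of (monic) stars / relations: equal as subobjects, i.e. up to a
  (unique) isomorphism of their domains.\<close>
definition same_rel :: "('o, 'm, 'x) category_scheme \<Rightarrow> 'm \<Rightarrow> 'm \<Rightarrow> 'm \<Rightarrow> 'm \<Rightarrow> bool" where
  "same_rel C s1 s2 t1 t2 \<longleftrightarrow> parallel C s1 s2 \<and> parallel C t1 t2 \<and> Cod C s1 = Cod C t1 \<and>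
     (\<exists>\<phi>. iso C \<phi> \<and> Dom C \<phi> = Dom C t1 \<and> Cod C \<phi> = Dom C s1 \<and>
          Comp C s1 \<phi> = t1 \<and> Comp C s2 \<phi> = t2)"

text \<open>(m1, m2) is (a choice of) the image f(lambda): the jointly monic part of the
  (regular epi, jointly monic) factorisation of (f l1, f l2).\<close>
definition image_star :: "('o, 'm, 'x) category_scheme \<Rightarrow> 'm \<Rightarrow> 'm \<Rightarrow> 'm \<Rightarrow> 'm \<Rightarrow> 'm \<Rightarrow> bool" where
  "image_star C f l1 l2 m1 m2 \<longleftrightarrow> f \<in> Ar C \<and> parallel C l1 l2 \<and> Cod C l1 = Dom C f \<and>
     jointly_monic C m1 m2 \<and> Cod C m1 = Cod C f \<and>
     (\<exists>e. regular_epi C e \<and> Dom C e = Dom C l1 \<and> Cod C e = Dom C m1 \<and>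
          Comp C m1 e = Comp C f l1 \<and> Comp C m2 e = Comp C f l2)"

definition diamond :: "('o, 'm, 'x) category_scheme \<Rightarrow> 'm \<Rightarrow> 'm \<Rightarrow> 'm \<Rightarrow> 'm \<Rightarrow> bool" where
  "diamond C e f g h \<longleftrightarrow> e \<in> Ar C \<and> f \<in> Ar C \<and> g \<in> Ar C \<and> h \<in> Ar C \<and>
     Dom C e = Dom C f \<and> Cod C e = Dom C g \<and> Cod C f = Dom C h \<and> Cod C g = Cod C h \<and>
     Comp C g e = Comp C h f"

definition regular_diamond :: "('o, 'm, 'x) category_scheme \<Rightarrow> 'm \<Rightarrow> 'm \<Rightarrow> 'm \<Rightarrow> 'm \<Rightarrow> bool" where
  "regular_diamond C e f g h \<longleftrightarrow> diamond C e f g h \<and>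
     regular_epi C e \<and> regular_epi C f \<and> regular_epi C g \<and> regular_epi C h"

definition left_saturated :: "('o, 'm, 'x) category_scheme \<Rightarrow> 'm set \<Rightarrow> 'm \<Rightarrow> 'm \<Rightarrow> 'm \<Rightarrow> 'm \<Rightarrow> bool" where
  "left_saturated C N e f g h \<longleftrightarrow>
     (\<exists>F1 F2 G1 G2 m1 m2. kernel_star C N f F1 F2 \<and> kernel_star C N g G1 G2 \<and>
        image_star C e F1 F2 m1 m2 \<and> same_rel C m1 m2 G1 G2)"

definition star_regular :: "('o, 'm, 'x) category_scheme \<Rightarrow> 'm set \<Rightarrow> bool" where
  "star_regular C N \<longleftrightarrow> regular_category C \<and> ideal C N \<and> has_N_kernels C N \<and>
     (\<forall>q. regular_epi C q \<longrightarrow> (\<exists>t1 t2. star C N t1 t2 \<and> coequaliser C t1 t2 q))"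

end

theory Submission
  imports Defs
begin

locale catx = fixes C :: "('o,'m,'x) category_scheme" assumes cat: "is_category C"
begin

lemma ex1_uniq: "\<exists>!u. P u \<Longrightarrow> P a \<Longrightarrow> P b \<Longrightarrow> a = b" by blast

lemma comp_ar[simp]: "f \<in> Ar C \<Longrightarrow> g \<in> Ar C \<Longrightarrow> Cod C f = Dom C g \<Longrightarrow> Comp C g f \<in> Ar C"
  using cat unfolding is_category_def by blast
lemma dom_comp[simp]: "f \<in> Ar C \<Longrightarrow> g \<in> Ar C \<Longrightarrow> Cod C f = Dom C g \<Longrightarrow> Dom C (Comp C g f) = Dom C f"
  using cat unfolding is_category_def by blast
lemma cod_comp[simp]: "f \<in> Ar C \<Longrightarrow> g \<in> Ar C \<Longrightarrow> Cod C f = Dom C g \<Longrightarrow> Cod C (Comp C g f) = Cod C g"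
  using cat unfolding is_category_def by blast
lemma assoc[simp]: "f \<in> Ar C \<Longrightarrow> g \<in> Ar C \<Longrightarrow> h \<in> Ar C \<Longrightarrow> Cod C f = Dom C g \<Longrightarrow> Cod C g = Dom C h \<Longrightarrow>
   Comp C (Comp C h g) f = Comp C h (Comp C g f)"
proof -
  assume "f \<in> Ar C" "g \<in> Ar C" "h \<in> Ar C" "Cod C f = Dom C g" "Cod C g = Dom C h"
  then have "Comp C h (Comp C g f) = Comp C (Comp C h g) f" using cat unfolding is_category_def by blast
  then show ?thesis by simp
qed
lemma dom_ob: "f \<in> Ar C \<Longrightarrow> Dom C f \<in> Ob C" using cat unfolding is_category_def by blast
lemma cod_ob: "f \<in> Ar C \<Longrightarrow> Cod C f \<in> Ob C" using cat unfolding is_category_def by blast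
lemma id_ar[simp]: "X \<in> Ob C \<Longrightarrow> Id C X \<in> Ar C" using cat unfolding is_category_def by blast
lemma id_dom[simp]: "X \<in> Ob C \<Longrightarrow> Dom C (Id C X) = X" using cat unfolding is_category_def by blast
lemma id_cod[simp]: "X \<in> Ob C \<Longrightarrow> Cod C (Id C X) = X" using cat unfolding is_category_def by blast
lemma idr[simp]: "f \<in> Ar C \<Longrightarrow> X = Dom C f \<Longrightarrow> Comp C f (Id C X) = f" using cat unfolding is_category_def by blast
lemma idl[simp]: "f \<in> Ar C \<Longrightarrow> X = Cod C f \<Longrightarrow> Comp C (Id C X) f = f" using cat unfolding is_category_def by blast

lemma coeq_basic:
  assumes "coequaliser C a b q"
  shows "a \<in> Ar C" "b \<in> Ar C" "Dom C a = Dom C b" "Cod C a = Cod C b" "q \<in> Ar C" "Dom C q = Cod C a"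
    "Comp C q a = Comp C q b"
  using assms unfolding coequaliser_def parallel_def by auto

lemma coeq_univ:
  assumes "coequaliser C a b q" "h \<in> Ar C" "Dom C h = Cod C a" "Comp C h a = Comp C h b"
  shows "\<exists>u. u \<in> Ar C \<and> Dom C u = Cod C q \<and> Cod C u = Cod C h \<and> Comp C u q = h"
proof -
  have "\<exists>!u. u \<in> Ar C \<and> Dom C u = Cod C q \<and> Cod C u = Cod C h \<and> Comp C u q = h"
    using assms unfolding coequaliser_def by blast
  then show ?thesis by blast
qed

lemma coeq_epi:
  assumes q: "coequaliser C a b q" and x: "x \<in> Ar C" "Dom C x = Cod C q"
    and y: "y \<in> Ar C" "Dom C y = Cod C q" "Cod C x = Cod C y"
    and e: "Comp C x q = Comp C y q"
  shows "x = y"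
proof -
  have qa: "q \<in> Ar C" "Dom C q = Cod C a" "a \<in> Ar C" "b \<in> Ar C" "Cod C b = Cod C a" "Comp C q a = Comp C q b"
    using q unfolding coequaliser_def parallel_def by auto
  let ?h = "Comp C x q"
  have "?h \<in> Ar C" "Dom C ?h = Cod C a" using qa x by auto
  moreover have "Comp C ?h a = Comp C ?h b" using qa x by simp
  ultimately have U: "\<exists>!u. u \<in> Ar C \<and> Dom C u = Cod C q \<and> Cod C u = Cod C ?h \<and> Comp C u q = ?h"
    using q unfolding coequaliser_def by blast
  have "Cod C ?h = Cod C x" using qa x by auto
  then have "x \<in> Ar C \<and> Dom C x = Cod C q \<and> Cod C x = Cod C ?h \<and> Comp C x q = ?h"
     "y \<in> Ar C \<and> Dom C y = Cod C q \<and> Cod C y = Cod C ?h \<and> Comp C y q = ?h" using x y e by auto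
  then show ?thesis using U by blast
qed

lemma coeq_eq_split:
  assumes q: "coequaliser C a a q"
  shows "\<exists>w\<in>Ar C. Dom C w = Cod C q \<and> Comp C w q = Id C (Cod C a)"
proof -
  have qa: "q \<in> Ar C" "Dom C q = Cod C a" "a \<in> Ar C"
    using q unfolding coequaliser_def parallel_def by auto
  have "Id C (Cod C a) \<in> Ar C" "Dom C (Id C (Cod C a)) = Cod C a" using qa cod_ob by auto
  moreover have "Comp C (Id C (Cod C a)) a = Comp C (Id C (Cod C a)) a" ..
  ultimately show ?thesis using q unfolding coequaliser_def by blast
qed

lemma kstar_factor:
  assumes kp: "kernel_pair C f p1 p2" and k: "N_kernel C N p1 k"
    and t: "t1 \<in> Ar C" "t2 \<in> Ar C" "Cod C t1 = Dom C f" "Cod C t2 = Dom C f" "Dom C t1 = Dom C t2"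
      "Comp C f t1 = Comp C f t2" "t1 \<in> N"
  shows "\<exists>v\<in>Ar C. Dom C v = Dom C t1 \<and> Cod C v = Dom C k \<and> Comp C p1 (Comp C k v) = t1 \<and> Comp C p2 (Comp C k v) = t2"
proof -
  have "\<exists>!u. u \<in> Ar C \<and> Dom C u = Dom C t1 \<and> Cod C u = Dom C p1 \<and> Comp C p1 u = t1 \<and> Comp C p2 u = t2"
    using kp t unfolding kernel_pair_def pullback_def by blast
  then obtain u where u: "u \<in> Ar C" "Dom C u = Dom C t1" "Cod C u = Dom C p1" "Comp C p1 u = t1" "Comp C p2 u = t2"
    by blast
  have "\<exists>!v. v \<in> Ar C \<and> Dom C v = Dom C u \<and> Cod C v = Dom C k \<and> Comp C k v = u"
    using k u t unfolding N_kernel_def by blast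
  then obtain v where v: "v \<in> Ar C" "Dom C v = Dom C u" "Cod C v = Dom C k" "Comp C k v = u"
    by blast
  show ?thesis using u v by auto
qed

lemma ideal_comp: "ideal C N \<Longrightarrow> f \<in> N \<Longrightarrow> g \<in> Ar C \<Longrightarrow> Cod C g = Dom C f \<Longrightarrow> Comp C f g \<in> N"
  unfolding ideal_def by blast
lemma ideal_comp2: "ideal C N \<Longrightarrow> f \<in> N \<Longrightarrow> g \<in> Ar C \<Longrightarrow> Cod C f = Dom C g \<Longrightarrow> Comp C g f \<in> N"
  unfolding ideal_def by blast

lemma nker_mono:
  assumes N: "ideal C N" and k: "N_kernel C N f k"
    and a: "a \<in> Ar C" "b \<in> Ar C" "Cod C a = Dom C k" "Cod C b = Dom C k" "Dom C a = Dom C b"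
    and e: "Comp C k a = Comp C k b"
  shows "a = b"
proof -
  have kk: "f \<in> Ar C" "k \<in> Ar C" "Cod C k = Dom C f" "Comp C f k \<in> N" using k unfolding N_kernel_def by auto
  have ka: "Comp C k a \<in> Ar C" "Cod C (Comp C k a) = Dom C f" using kk a by auto
  have "Comp C (Comp C f k) a \<in> N" using ideal_comp[OF N kk(4) a(1)] kk a by simp
  hence "Comp C f (Comp C k a) \<in> N" using kk a by simp
  then have U: "\<exists>!u. u \<in> Ar C \<and> Dom C u = Dom C (Comp C k a) \<and> Cod C u = Dom C k \<and> Comp C k u = Comp C k a"
    using k ka unfolding N_kernel_def by blast
  have "Dom C (Comp C k a) = Dom C a" "Dom C (Comp C k a) = Dom C b" using a kk by auto
  then show ?thesis using a e kk by (intro ex1_uniq[OF U]) auto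
qed

lemma kstar_jm:
  assumes N: "ideal C N" and kp: "kernel_pair C f p1 p2" and k: "N_kernel C N p1 k"
    and a: "a \<in> Ar C" "b \<in> Ar C" "Cod C a = Dom C k" "Cod C b = Dom C k" "Dom C a = Dom C b"
    and e1: "Comp C (Comp C p1 k) a = Comp C (Comp C p1 k) b"
    and e2: "Comp C (Comp C p2 k) a = Comp C (Comp C p2 k) b"
  shows "a = b"
proof -
  have p: "f \<in> Ar C" "p1 \<in> Ar C" "p2 \<in> Ar C" "Cod C p1 = Dom C f" "Cod C p2 = Dom C f" "Dom C p1 = Dom C p2"
     "Comp C f p1 = Comp C f p2"
    using kp unfolding kernel_pair_def pullback_def by auto
  have kk: "k \<in> Ar C" "Cod C k = Dom C p1" using k unfolding N_kernel_def by auto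
  let ?x = "Comp C k a" let ?y = "Comp C k b"
  have xy: "?x \<in> Ar C" "?y \<in> Ar C" "Cod C ?x = Dom C p1" "Cod C ?y = Dom C p1" "Dom C ?x = Dom C ?y"
    using a kk by auto
  let ?s = "Comp C p1 ?x" let ?t = "Comp C p2 ?x"
  have st: "?s \<in> Ar C" "?t \<in> Ar C" "Cod C ?s = Dom C f" "Cod C ?t = Dom C f" "Dom C ?s = Dom C ?t"
    using p xy by auto
  have "Comp C f ?s = Comp C (Comp C f p1) ?x" using p(1-6) xy by simp
  also have "\<dots> = Comp C (Comp C f p2) ?x" using p(7) by simp
  also have "\<dots> = Comp C f ?t" using p(1-6) xy by simp
  finally have "Comp C f ?s = Comp C f ?t" .
  then have U: "\<exists>!u. u \<in> Ar C \<and> Dom C u = Dom C ?s \<and> Cod C u = Dom C p1 \<and> Comp C p1 u = ?s \<and> Comp C p2 u = ?t"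
    using kp st unfolding kernel_pair_def pullback_def by blast
  have "Comp C p1 ?y = ?s" "Comp C p2 ?y = ?t" using e1 e2 p kk a by (simp_all)
  moreover have "Dom C ?y = Dom C ?s" "Dom C ?x = Dom C ?s" using xy p by auto
  ultimately have "?x = ?y" using xy by (intro ex1_uniq[OF U]) auto
  then show ?thesis using nker_mono[OF N k a] by simp
qed

lemma mono_kstar:
  assumes HK: "has_N_kernels C N" and m: "mono C m"
  shows "\<exists>s1 s2 d1 d2. kernel_star C N m s1 s2 \<and> diag_star C N (Dom C m) d1 d2 \<and> same_rel C s1 s2 d1 d2"
proof -
  have mA: "m \<in> Ar C" using m unfolding mono_def by auto
  define U where "U = Dom C m"
  define i where "i = Id C U"
  have U: "U \<in> Ob C" using mA dom_ob U_def by auto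
  have i: "i \<in> Ar C" "Dom C i = U" "Cod C i = U" using U i_def by auto
  have kp: "kernel_pair C m i i"
    unfolding kernel_pair_def pullback_def
  proof (intro conjI ballI impI)
    fix a b assume ab: "a \<in> Ar C" "b \<in> Ar C" "Cod C a = Dom C m" "Cod C b = Dom C m" "Dom C a = Dom C b"
      "Comp C m a = Comp C m b"
    then have "a = b" using m unfolding mono_def by blast
    show "\<exists>!u. u \<in> Ar C \<and> Dom C u = Dom C a \<and> Cod C u = Dom C i \<and> Comp C i u = a \<and> Comp C i u = b"
    proof (rule ex1I[of _ a])
      show "a \<in> Ar C \<and> Dom C a = Dom C a \<and> Cod C a = Dom C i \<and> Comp C i a = a \<and> Comp C i a = b"
        using ab \<open>a = b\<close> i U_def i_def by auto
    next
      fix u assume "u \<in> Ar C \<and> Dom C u = Dom C a \<and> Cod C u = Dom C i \<and> Comp C i u = a \<and> Comp C i u = b"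
      then show "u = a" using i U_def i_def by auto
    qed
  qed (use mA i U_def in auto)
  obtain k where k: "N_kernel C N i k" using HK i unfolding has_N_kernels_def by blast
  have kk: "k \<in> Ar C" "Cod C k = U" using k i unfolding N_kernel_def by auto
  have ik: "Comp C i k = k" using kk i_def by simp
  have so: "star_of C N i i k k" unfolding star_of_def parallel_def using i k ik by auto
  have ks: "kernel_star C N m k k" unfolding kernel_star_def using kp so by blast
  have ds: "diag_star C N (Dom C m) k k" unfolding diag_star_def using so U_def i_def by simp
  define j where "j = Id C (Dom C k)"
  have j: "j \<in> Ar C" "Dom C j = Dom C k" "Cod C j = Dom C k" "Comp C j j = j" "Comp C k j = k"
    using kk dom_ob j_def by auto
  have "iso C j" unfolding iso_def using j j_def by (intro conjI bexI[of _ j]) auto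
  then have "same_rel C k k k k" unfolding same_rel_def parallel_def using j kk by auto
  then show ?thesis using ks ds by blast
qed

lemma iso_cancel:
  assumes "iso C \<phi>" "s1 \<in> Ar C" "s2 \<in> Ar C" "Dom C s1 = Cod C \<phi>" "Dom C s2 = Cod C \<phi>"
    "Comp C s1 \<phi> = Comp C s2 \<phi>"
  shows "s1 = s2"
proof -
  obtain \<psi> where p: "\<phi> \<in> Ar C" "\<psi> \<in> Ar C" "Dom C \<psi> = Cod C \<phi>" "Cod C \<psi> = Dom C \<phi>"
    "Comp C \<phi> \<psi> = Id C (Cod C \<phi>)" using assms(1) unfolding iso_def by blast
  have "s1 = Comp C s1 (Comp C \<phi> \<psi>)" using p assms(2,4) by simp
  also have "\<dots> = Comp C (Comp C s1 \<phi>) \<psi>" using p assms(2,4) by simp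
  also have "\<dots> = Comp C (Comp C s2 \<phi>) \<psi>" using assms(6) by simp
  also have "\<dots> = Comp C s2 (Comp C \<phi> \<psi>)" using p assms(3,5) by simp
  also have "\<dots> = s2" using p assms(3,5) by simp
  finally show ?thesis .
qed

lemma kstar_mono:
  assumes reg: "regular_category C" and N: "ideal C N"
    and SR: "\<forall>q. regular_epi C q \<longrightarrow> (\<exists>t1 t2. star C N t1 t2 \<and> coequaliser C t1 t2 q)"
    and mA: "m \<in> Ar C" and ks: "kernel_star C N m s1 s2" and ds: "diag_star C N (Dom C m) d1 d2"
    and sr: "same_rel C s1 s2 d1 d2"
  shows "mono C m"
proof -
  obtain p1 p2 k where kp: "kernel_pair C m p1 p2" and k: "N_kernel C N p1 k"
    and s: "s1 = Comp C p1 k" "s2 = Comp C p2 k"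
    using ks unfolding kernel_star_def star_of_def by blast
  have p: "p1 \<in> Ar C" "p2 \<in> Ar C" "Cod C p1 = Dom C m" "Cod C p2 = Dom C m" "Dom C p1 = Dom C p2"
     "Comp C m p1 = Comp C m p2"
    using kp unfolding kernel_pair_def pullback_def by auto
  have kk: "k \<in> Ar C" "Cod C k = Dom C p1" using k unfolding N_kernel_def by auto
  obtain k' where "d1 = Comp C (Id C (Dom C m)) k'" "d2 = Comp C (Id C (Dom C m)) k'"
    using ds unfolding diag_star_def star_of_def by blast
  then have d12: "d1 = d2" by simp
  obtain \<phi> where ph: "iso C \<phi>" "Cod C \<phi> = Dom C s1" "Comp C s1 \<phi> = d1" "Comp C s2 \<phi> = d2"
    using sr unfolding same_rel_def by blast
  have sA: "s1 \<in> Ar C" "s2 \<in> Ar C" "Dom C s1 = Dom C k" "Dom C s2 = Dom C k"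
    using s p kk by auto
  have s12: "s1 = s2" using iso_cancel[OF ph(1) sA(1,2)] ph sA d12 by simp
  obtain q where q: "coequaliser C p1 p2 q" using reg kp unfolding regular_category_def by blast
  have qA: "q \<in> Ar C" "Dom C q = Dom C m" "Comp C q p1 = Comp C q p2"
    using coeq_basic[OF q] p by auto
  have "regular_epi C q" unfolding regular_epi_def using q by blast
  then obtain t1 t2 where t: "star C N t1 t2" and tq: "coequaliser C t1 t2 q" using SR by blast
  have tA: "t1 \<in> Ar C" "t2 \<in> Ar C" "Cod C t1 = Dom C m" "Cod C t2 = Dom C m" "Dom C t1 = Dom C t2"
     "t1 \<in> N" "Comp C q t1 = Comp C q t2"
    using t coeq_basic[OF tq] qA unfolding star_def parallel_def by auto
  obtain g where g: "g \<in> Ar C" "Dom C g = Cod C q" "Comp C g q = m" using coeq_univ[OF q mA] p by auto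
  have "Comp C m t1 = Comp C (Comp C g q) t1" using g(3) by simp
  also have "\<dots> = Comp C g (Comp C q t1)" using g(1,2) qA(1,2) tA(1,3) by simp
  also have "\<dots> = Comp C g (Comp C q t2)" using tA(7) by simp
  also have "\<dots> = Comp C (Comp C g q) t2" using g(1,2) qA(1,2) tA(2,4) by simp
  also have "\<dots> = Comp C m t2" using g(3) by simp
  finally have mt: "Comp C m t1 = Comp C m t2" .
  obtain v where v: "v \<in> Ar C" "Cod C v = Dom C k" "Comp C p1 (Comp C k v) = t1" "Comp C p2 (Comp C k v) = t2"
    using kstar_factor[OF kp k tA(1-5) mt tA(6)] by blast
  have "t1 = Comp C s1 v" using v s p(1) kk by simp
  also have "\<dots> = Comp C s2 v" using s12 by simp
  also have "\<dots> = t2" using v s p(2,5) kk by simp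
  finally have t12: "t1 = t2" .
  obtain w where w: "w \<in> Ar C" "Dom C w = Cod C q" "Comp C w q = Id C (Cod C t1)"
    using coeq_eq_split[of t1 q] tq t12 by blast
  have "p1 = Comp C (Comp C w q) p1" using w(3) p(1,3) tA(3) by simp
  also have "\<dots> = Comp C w (Comp C q p1)" using w(1,2) p(1,3) qA(1,2) by simp
  also have "\<dots> = Comp C w (Comp C q p2)" using qA(3) by simp
  also have "\<dots> = Comp C (Comp C w q) p2" using w(1,2) p(2,4) qA(1,2) by simp
  also have "\<dots> = p2" using w(3) p(2,4) tA(3) by simp
  finally have p12: "p1 = p2" .
  show ?thesis unfolding mono_def
  proof (intro conjI ballI impI mA)
    fix a b assume ab: "a \<in> Ar C" "b \<in> Ar C" "Cod C a = Dom C m" "Cod C b = Dom C m" "Dom C a = Dom C b"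
      "Comp C m a = Comp C m b"
    then have "\<exists>!u. u \<in> Ar C \<and> Dom C u = Dom C a \<and> Cod C u = Dom C p1 \<and> Comp C p1 u = a \<and> Comp C p2 u = b"
      using kp unfolding kernel_pair_def pullback_def by blast
    then obtain u where "u \<in> Ar C" "Comp C p1 u = a" "Comp C p2 u = b" by blast
    then show "a = b" using p12 by simp
  qed
qed

lemma regepi_coeq: "regular_epi C q \<Longrightarrow> \<exists>a b. coequaliser C a b q"
  unfolding regular_epi_def by blast

lemma id_coeq:
  assumes "X \<in> Ob C" shows "coequaliser C (Id C X) (Id C X) (Id C X)"
  unfolding coequaliser_def parallel_def
proof (intro conjI ballI impI)
  fix h assume h: "h \<in> Ar C" "Dom C h = Cod C (Id C X)"
  show "\<exists>!u. u \<in> Ar C \<and> Dom C u = Cod C (Id C X) \<and> Cod C u = Cod C h \<and> Comp C u (Id C X) = h"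
  proof (rule ex1I[of _ h])
    show "h \<in> Ar C \<and> Dom C h = Cod C (Id C X) \<and> Cod C h = Cod C h \<and> Comp C h (Id C X) = h"
      using h assms by auto
  next
    fix u assume "u \<in> Ar C \<and> Dom C u = Cod C (Id C X) \<and> Cod C u = Cod C h \<and> Comp C u (Id C X) = h"
    then show "u = h" using assms by auto
  qed
qed (use assms in auto)

lemma mono_regepi_split:
  assumes g: "mono C g" and c: "coequaliser C a b g"
  shows "\<exists>w\<in>Ar C. Dom C w = Cod C g \<and> Cod C w = Dom C g \<and> Comp C w g = Id C (Dom C g) \<and> Comp C g w = Id C (Cod C g)"
proof -
  note cb = coeq_basic[OF c]
  have mm: "\<And>a b. a\<in>Ar C \<Longrightarrow> b\<in>Ar C \<Longrightarrow> Cod C a = Dom C g \<Longrightarrow> Cod C b = Dom C g \<Longrightarrow> Dom C a = Dom C b \<Longrightarrow> Comp C g a = Comp C g b \<Longrightarrow> a = b"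
    using g unfolding mono_def by blast
  have ab: "a = b" by (rule mm[OF cb(1,2)]) (use cb in auto)
  have c': "coequaliser C a a g" using c ab by simp
  obtain w where w: "w \<in> Ar C" "Dom C w = Cod C g" "Comp C w g = Id C (Cod C a)"
    using coeq_eq_split[OF c'] by blast
  have X: "Cod C a \<in> Ob C" using cb(1) cod_ob by blast
  have "Cod C (Comp C w g) = Cod C w" using w(1,2) cb(5) by simp
  then have cw: "Cod C w = Dom C g" using w(3) X cb(6) by simp
  have e: "Comp C (Comp C g w) g = Comp C (Id C (Cod C g)) g"
  proof -
    have "Comp C (Comp C g w) g = Comp C g (Comp C w g)" using w(1,2) cb(5) cw by simp
    also have "\<dots> = g" using w(3) cb(5,6) by simp
    finally show ?thesis using cb(5) by simp
  qed
  have Y: "Cod C g \<in> Ob C" using cb(5) cod_ob by blast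
  have "Comp C g w = Id C (Cod C g)"
    by (rule coeq_epi[OF c _ _ _ _ _ e]) (use w cw cb(5) Y in auto)
  then show ?thesis using w cw cb(6) by auto
qed

lemma kstar_N: "kernel_star C N f s1 s2 \<Longrightarrow>
   \<exists>p1 p2 k. kernel_pair C f p1 p2 \<and> N_kernel C N p1 k \<and> s1 = Comp C p1 k \<and> s2 = Comp C p2 k"
  unfolding kernel_star_def star_of_def by blast

lemma kp_basic:
  assumes "kernel_pair C f p1 p2"
  shows "f \<in> Ar C" "p1 \<in> Ar C" "p2 \<in> Ar C" "Cod C p1 = Dom C f" "Cod C p2 = Dom C f" "Dom C p1 = Dom C p2"
     "Comp C f p1 = Comp C f p2"
  using assms unfolding kernel_pair_def pullback_def by auto

lemma nk_basic:
  assumes "N_kernel C N f k"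
  shows "k \<in> Ar C" "Cod C k = Dom C f" "Comp C f k \<in> N"
  using assms unfolding N_kernel_def by auto

lemma nk_univ:
  assumes "N_kernel C N f k" "g \<in> Ar C" "Cod C g = Dom C f" "Comp C f g \<in> N"
  shows "\<exists>u. u \<in> Ar C \<and> Dom C u = Dom C g \<and> Cod C u = Dom C k \<and> Comp C k u = g"
proof -
  have "\<exists>!u. u \<in> Ar C \<and> Dom C u = Dom C g \<and> Cod C u = Dom C k \<and> Comp C k u = g"
    using assms unfolding N_kernel_def by blast
  then show ?thesis by blast
qed

lemma kstar_basic:
  assumes ks: "kernel_star C N f s1 s2"
  shows "s1 \<in> Ar C" "s2 \<in> Ar C" "Cod C s1 = Dom C f" "Cod C s2 = Dom C f" "Dom C s1 = Dom C s2" "s1 \<in> N"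
    "Comp C f s1 = Comp C f s2"
proof -
  obtain p1 p2 k where kp: "kernel_pair C f p1 p2" and k: "N_kernel C N p1 k"
    and s: "s1 = Comp C p1 k" "s2 = Comp C p2 k" using kstar_N[OF ks] by blast
  note p = kp_basic[OF kp] and kk = nk_basic[OF k]
  show "s1 \<in> Ar C" "s2 \<in> Ar C" "Cod C s1 = Dom C f" "Cod C s2 = Dom C f" "Dom C s1 = Dom C s2" "s1 \<in> N"
    using p(1-6) kk s by auto
  have "Comp C f s1 = Comp C (Comp C f p1) k" using s p(1-6) kk by simp
  also have "\<dots> = Comp C (Comp C f p2) k" using p(7) by simp
  also have "\<dots> = Comp C f s2" using s p(1-6) kk by simp
  finally show "Comp C f s1 = Comp C f s2" .
qed

lemma regepi_star:
  assumes reg: "regular_category C" and N: "ideal C N" and HK: "has_N_kernels C N"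
    and CK: "\<forall>f\<in>Ar C. \<forall>s1 s2. kernel_star C N f s1 s2 \<longrightarrow> (\<exists>q. coequaliser C s1 s2 q)"
    and LS: "\<forall>e f g. regular_diamond C e f g (Id C (Cod C f)) \<longrightarrow> left_saturated C N e f g (Id C (Cod C f))"
    and II: "\<forall>m\<in>Ar C. mono C m \<longleftrightarrow>
       (\<exists>s1 s2 d1 d2. kernel_star C N m s1 s2 \<and> diag_star C N (Dom C m) d1 d2 \<and> same_rel C s1 s2 d1 d2)"
    and fr: "regular_epi C f"
  shows "\<exists>t1 t2. star C N t1 t2 \<and> coequaliser C t1 t2 f"
proof -
  obtain a b where fc: "coequaliser C a b f" using regepi_coeq[OF fr] by blast
  note fb = coeq_basic[OF fc]
  have fcomp: "finitely_complete C" using reg unfolding regular_category_def by blast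
  obtain p1 p2 where kp: "kernel_pair C f p1 p2"
    using fcomp fb(5) unfolding finitely_complete_def kernel_pair_def by blast
  note pb = kp_basic[OF kp]
  obtain k where k: "N_kernel C N p1 k" using HK pb(2) unfolding has_N_kernels_def by blast
  note kb = nk_basic[OF k]
  define s1 where "s1 = Comp C p1 k"
  define s2 where "s2 = Comp C p2 k"
  have "star_of C N p1 p2 s1 s2" unfolding star_of_def parallel_def
    using k pb s1_def s2_def by auto
  then have ks: "kernel_star C N f s1 s2" unfolding kernel_star_def using kp by blast
  note sb = kstar_basic[OF ks]
  obtain q where qc: "coequaliser C s1 s2 q" using CK fb(5) ks by blast
  note qb = coeq_basic[OF qc]
  obtain g where g: "g \<in> Ar C" "Dom C g = Cod C q" "Cod C g = Cod C f" "Comp C g q = f"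
    using coeq_univ[OF qc fb(5)] fb(6) sb by auto
  have domf: "Dom C f = Cod C a" using fb by simp
  have gc: "coequaliser C (Comp C q a) (Comp C q b) g"
    unfolding coequaliser_def parallel_def
  proof (intro conjI ballI impI)
    show "Comp C q a \<in> Ar C" "Comp C q b \<in> Ar C" using qb fb sb domf by auto
    show "Dom C (Comp C q a) = Dom C (Comp C q b)" "Cod C (Comp C q a) = Cod C (Comp C q b)"
      using qb fb sb domf by auto
    show "g \<in> Ar C" by (rule g(1))
    show "Dom C g = Cod C (Comp C q a)" using qb fb sb domf g by auto
    have "Comp C g (Comp C q a) = Comp C f a" using g qb fb sb domf by (simp del: assoc add: assoc[symmetric])
    also have "\<dots> = Comp C f b" by (rule fb(7))
    also have "\<dots> = Comp C g (Comp C q b)" using g qb fb sb domf by (simp del: assoc add: assoc[symmetric])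
    finally show "Comp C g (Comp C q a) = Comp C g (Comp C q b)" .
  next
    fix h assume h: "h \<in> Ar C" "Dom C h = Cod C (Comp C q a)" "Comp C h (Comp C q a) = Comp C h (Comp C q b)"
    have dh: "Dom C h = Cod C q" using h(2) qb fb sb domf by auto
    have hq: "Comp C h q \<in> Ar C" "Dom C (Comp C h q) = Cod C a" "Cod C (Comp C h q) = Cod C h"
      using h(1) dh qb fb sb domf by auto
    have "Comp C (Comp C h q) a = Comp C (Comp C h q) b" using h(1,3) dh qb fb sb domf by simp
    then obtain w where w: "w \<in> Ar C" "Dom C w = Cod C f" "Cod C w = Cod C h" "Comp C w f = Comp C h q"
      using coeq_univ[OF fc hq(1,2)] hq(3) by auto
    have wg: "Comp C w g = h"
    proof (rule coeq_epi[OF qc])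
      show "Comp C (Comp C w g) q = Comp C h q" using w g qb by simp
    qed (use w g h(1) dh in auto)
    show "\<exists>!u. u \<in> Ar C \<and> Dom C u = Cod C g \<and> Cod C u = Cod C h \<and> Comp C u g = h"
    proof (rule ex1I[of _ w])
      show "w \<in> Ar C \<and> Dom C w = Cod C g \<and> Cod C w = Cod C h \<and> Comp C w g = h" using w g wg by auto
    next
      fix u assume u: "u \<in> Ar C \<and> Dom C u = Cod C g \<and> Cod C u = Cod C h \<and> Comp C u g = h"
      show "u = w"
      proof (rule coeq_epi[OF fc])
        have "Comp C u f = Comp C u (Comp C g q)" using g(4) by simp
        also have "\<dots> = Comp C h q" using u g(1,2) qb(5) by (simp del: assoc add: assoc[symmetric])
        finally show "Comp C u f = Comp C w f" using w by simp
      qed (use u w g in auto)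
    qed
  qed
  have greg: "regular_epi C g" unfolding regular_epi_def using gc by blast
  have qreg: "regular_epi C q" unfolding regular_epi_def using qc by blast
  have Y: "Cod C f \<in> Ob C" using fb(5) cod_ob by blast
  have idreg: "regular_epi C (Id C (Cod C f))" unfolding regular_epi_def using id_coeq[OF Y] by blast
  have "diamond C q f g (Id C (Cod C f))" unfolding diamond_def
    using qb fb g Y sb domf by auto
  then have "regular_diamond C q f g (Id C (Cod C f))" unfolding regular_diamond_def
    using greg qreg fr idreg by blast
  then have "left_saturated C N q f g (Id C (Cod C f))" using LS by blast
  then obtain F1 F2 G1 G2 m1 m2 where F: "kernel_star C N f F1 F2" and G: "kernel_star C N g G1 G2"
    and im: "image_star C q F1 F2 m1 m2" and smr: "same_rel C m1 m2 G1 G2"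
    unfolding left_saturated_def by blast
  note Fb = kstar_basic[OF F]
  obtain v where v: "v \<in> Ar C" "Cod C v = Dom C k" "Comp C p1 (Comp C k v) = F1" "Comp C p2 (Comp C k v) = F2"
    using kstar_factor[OF kp k Fb(1-5) Fb(7) Fb(6)] by blast
  have qF: "Comp C q F1 = Comp C q F2"
  proof -
    have dq: "Dom C q = Dom C f" using qb(6) sb(3) by simp
    have "Comp C q F1 = Comp C q (Comp C p1 (Comp C k v))" using v(3) by simp
    also have "\<dots> = Comp C (Comp C q s1) v" using v(1,2) qb(5) dq kb(1,2) pb(2,4) unfolding s1_def by simp
    also have "\<dots> = Comp C (Comp C q s2) v" using qb(7) by simp
    also have "\<dots> = Comp C q (Comp C p2 (Comp C k v))" using v(1,2) qb(5) dq kb(1,2) pb(3,5,6) unfolding s2_def by simp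
    also have "\<dots> = Comp C q F2" using v(4) by simp
    finally show ?thesis .
  qed
  obtain e where e: "regular_epi C e" "Cod C e = Dom C m1" "Comp C m1 e = Comp C q F1" "Comp C m2 e = Comp C q F2"
    and jm: "jointly_monic C m1 m2"
    using im unfolding image_star_def by blast
  obtain ea eb where ec: "coequaliser C ea eb e" using regepi_coeq[OF e(1)] by blast
  have mb: "m1 \<in> Ar C" "m2 \<in> Ar C" "Dom C m1 = Dom C m2" "Cod C m1 = Cod C m2"
    using jm unfolding jointly_monic_def parallel_def by auto
  have m12: "m1 = m2" by (rule coeq_epi[OF ec]) (use mb e qF in auto)
  obtain \<phi> where ph: "Comp C m1 \<phi> = G1" "Comp C m2 \<phi> = G2" using smr unfolding same_rel_def by blast
  have G12: "G1 = G2" using ph m12 by simp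
  note Gb = kstar_basic[OF G]
  obtain p1' p2' k' where kp': "kernel_pair C g p1' p2'" and k': "N_kernel C N p1' k'"
    and G': "G1 = Comp C p1' k'" "G2 = Comp C p2' k'" using kstar_N[OF G] by blast
  note pb' = kp_basic[OF kp'] and kb' = nk_basic[OF k']
  define Z where "Z = Dom C g"
  have Z: "Z \<in> Ob C" using g(1) dom_ob Z_def by blast
  have iZ: "Id C Z \<in> Ar C" "Dom C (Id C Z) = Z" "Cod C (Id C Z) = Z" using Z by auto
  obtain d where d: "N_kernel C N (Id C Z) d" using HK iZ unfolding has_N_kernels_def by blast
  note db = nk_basic[OF d]
  have dd: "Comp C (Id C Z) d = d" using db iZ by simp
  have dN: "d \<in> N" using db(3) dd by simp
  have ds: "diag_star C N (Dom C g) (Comp C (Id C Z) d) (Comp C (Id C Z) d)"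
    unfolding diag_star_def star_of_def parallel_def using iZ d Z_def by auto
  have dA: "d \<in> Ar C" "Cod C d = Dom C g" using db iZ Z_def by auto
  obtain \<phi>' where ph': "\<phi>' \<in> Ar C" "Dom C \<phi>' = Dom C d" "Cod C \<phi>' = Dom C k'"
     "Comp C p1' (Comp C k' \<phi>') = d" "Comp C p2' (Comp C k' \<phi>') = d"
    using kstar_factor[OF kp' k' dA(1) dA(1) dA(2) dA(2) refl refl dN] by blast
  have G1A: "G1 \<in> Ar C" "Cod C G1 = Dom C g" "Dom C G1 = Dom C k'" "G1 \<in> N"
    using Gb G' pb' kb' by auto
  have G1phi: "Comp C G1 \<phi>' = d" using G' ph' pb' kb' by simp
  have G2phi: "Comp C G2 \<phi>' = d" using G' ph' pb' kb' by simp
  obtain \<psi> where ps: "\<psi> \<in> Ar C" "Dom C \<psi> = Dom C G1" "Cod C \<psi> = Dom C d" "Comp C d \<psi> = G1"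
    using nk_univ[OF d G1A(1)] G1A iZ Z_def by auto
  have psphi: "Comp C \<psi> \<phi>' = Id C (Dom C d)"
  proof (rule nker_mono[OF N d])
    have "Comp C d (Comp C \<psi> \<phi>') = Comp C (Comp C d \<psi>) \<phi>'" using ps(1,2,3) ph'(1,2,3) dA G1A by simp
    also have "\<dots> = d" using ps(4) G1phi by simp
    also have "\<dots> = Comp C d (Id C (Dom C d))" using dA by simp
    finally show "Comp C d (Comp C \<psi> \<phi>') = Comp C d (Id C (Dom C d))" .
  qed (use ps ph' dA G1A dom_ob in auto)
  have Ok: "Dom C k' \<in> Ob C" using kb' dom_ob by blast
  have phips: "Comp C \<phi>' \<psi> = Id C (Dom C k')"
  proof (rule kstar_jm[OF N kp' k'])
    have "Comp C (Comp C p1' k') (Comp C \<phi>' \<psi>) = Comp C (Comp C (Comp C p1' k') \<phi>') \<psi>"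
      using ph'(1,2,3) ps(1,3) pb'(1-6) kb'(1,2) by simp
    also have "\<dots> = Comp C (Comp C G1 \<phi>') \<psi>" using G' by simp
    also have "\<dots> = G1" using G1phi ps by simp
    also have "\<dots> = Comp C (Comp C p1' k') (Id C (Dom C k'))" using G' G1A by simp
    finally show "Comp C (Comp C p1' k') (Comp C \<phi>' \<psi>) = Comp C (Comp C p1' k') (Id C (Dom C k'))" .
    have "Comp C (Comp C p2' k') (Comp C \<phi>' \<psi>) = Comp C (Comp C (Comp C p2' k') \<phi>') \<psi>"
      using ph'(1,2,3) ps(1,3) pb'(1-6) kb'(1,2) by simp
    also have "\<dots> = Comp C (Comp C G2 \<phi>') \<psi>" using G' by simp
    also have "\<dots> = G1" using G2phi ps by simp
    also have "\<dots> = Comp C (Comp C p2' k') (Id C (Dom C k'))" using G' G12 G1A by simp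
    finally show "Comp C (Comp C p2' k') (Comp C \<phi>' \<psi>) = Comp C (Comp C p2' k') (Id C (Dom C k'))" .
  qed (use ps ph' G1A Ok in auto)
  have iso: "iso C \<phi>'" unfolding iso_def
    using ph' ps psphi phips G1A by (intro conjI bexI[of _ \<psi>]) auto
  have "same_rel C G1 G2 (Comp C (Id C Z) d) (Comp C (Id C Z) d)"
    unfolding same_rel_def parallel_def
    using iso ph' G1phi G2phi dd G1A Gb dA by auto
  then have "mono C g" using II g(1) G ds by blast
  then obtain w where w: "w \<in> Ar C" "Dom C w = Cod C g" "Cod C w = Dom C g" "Comp C g w = Id C (Cod C g)" "Comp C w g = Id C (Dom C g)"
    using mono_regepi_split[OF _ gc] by blast
  have fsc: "coequaliser C s1 s2 f"
    unfolding coequaliser_def parallel_def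
  proof (intro conjI ballI impI)
    show "s1 \<in> Ar C" "s2 \<in> Ar C" "Dom C s1 = Dom C s2" "Cod C s1 = Cod C s2" using sb by auto
    show "f \<in> Ar C" "Dom C f = Cod C s1" "Comp C f s1 = Comp C f s2" using fb sb by auto
  next
    fix h assume h: "h \<in> Ar C" "Dom C h = Cod C s1" "Comp C h s1 = Comp C h s2"
    obtain u where u: "u \<in> Ar C" "Dom C u = Cod C q" "Cod C u = Cod C h" "Comp C u q = h"
      using coeq_univ[OF qc h] by blast
    have uwf: "Comp C (Comp C u w) f = h"
    proof -
      have "Comp C (Comp C u w) f = Comp C (Comp C u w) (Comp C g q)" using g(4) by simp
      also have "\<dots> = Comp C u (Comp C (Comp C w g) q)"
        using u(1,2) w(1,2,3) g(1,2) qb(5) by simp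
      also have "\<dots> = Comp C u q" using w(5) g(1,2) qb(5) by simp
      finally show ?thesis using u(4) by simp
    qed
    show "\<exists>!x. x \<in> Ar C \<and> Dom C x = Cod C f \<and> Cod C x = Cod C h \<and> Comp C x f = h"
    proof (rule ex1I[of _ "Comp C u w"])
      show "Comp C u w \<in> Ar C \<and> Dom C (Comp C u w) = Cod C f \<and> Cod C (Comp C u w) = Cod C h \<and> Comp C (Comp C u w) f = h"
        using u w g uwf by auto
    next
      fix x assume x: "x \<in> Ar C \<and> Dom C x = Cod C f \<and> Cod C x = Cod C h \<and> Comp C x f = h"
      show "x = Comp C u w"
        by (rule coeq_epi[OF fc]) (use x u w g uwf in auto)
    qed
  qed
  have "star C N s1 s2" unfolding star_def parallel_def using sb by auto
  then show ?thesis using fsc by blast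
qed

end

theorem lemma2p4:
  fixes C :: "('o, 'm) category" and N :: "'m set"
  assumes "regular_category C" and "ideal C N" and "has_N_kernels C N"
    and "\<forall>f\<in>Ar C. \<forall>s1 s2. kernel_star C N f s1 s2 \<longrightarrow> (\<exists>q. coequaliser C s1 s2 q)"
    and "\<forall>e f g. regular_diamond C e f g (Id C (Cod C f)) \<longrightarrow>
               left_saturated C N e f g (Id C (Cod C f))"
  shows "star_regular C N \<longleftrightarrow>
    (\<forall>m\<in>Ar C. mono C m \<longleftrightarrow>
       (\<exists>s1 s2 d1 d2. kernel_star C N m s1 s2 \<and> diag_star C N (Dom C m) d1 d2 \<and>
                      same_rel C s1 s2 d1 d2))"
proof -
  interpret catx C using assms(1) unfolding regular_category_def by unfold_locales blast
  show ?thesis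
  proof
    assume SR: "star_regular C N"
    have SR': "\<forall>q. regular_epi C q \<longrightarrow> (\<exists>t1 t2. star C N t1 t2 \<and> coequaliser C t1 t2 q)"
      using SR unfolding star_regular_def by blast
    show "\<forall>m\<in>Ar C. mono C m \<longleftrightarrow>
       (\<exists>s1 s2 d1 d2. kernel_star C N m s1 s2 \<and> diag_star C N (Dom C m) d1 d2 \<and> same_rel C s1 s2 d1 d2)"
    proof (intro ballI iffI)
      fix m assume "m \<in> Ar C" "mono C m"
      then show "\<exists>s1 s2 d1 d2. kernel_star C N m s1 s2 \<and> diag_star C N (Dom C m) d1 d2 \<and> same_rel C s1 s2 d1 d2"
        using mono_kstar[OF assms(3)] by blast
    next
      fix m assume m: "m \<in> Ar C"
        and "\<exists>s1 s2 d1 d2. kernel_star C N m s1 s2 \<and> diag_star C N (Dom C m) d1 d2 \<and> same_rel C s1 s2 d1 d2"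
      then obtain s1 s2 d1 d2 where "kernel_star C N m s1 s2" "diag_star C N (Dom C m) d1 d2" "same_rel C s1 s2 d1 d2"
        by blast
      then show "mono C m" using kstar_mono[OF assms(1,2) SR' m] by blast
    qed
  next
    assume II: "\<forall>m\<in>Ar C. mono C m \<longleftrightarrow>
       (\<exists>s1 s2 d1 d2. kernel_star C N m s1 s2 \<and> diag_star C N (Dom C m) d1 d2 \<and> same_rel C s1 s2 d1 d2)"
    show "star_regular C N" unfolding star_regular_def
      using assms(1-3) regepi_star[OF assms(1-5) II] by blast
  qed
qed

end
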